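(* Let $d\ge 0$ be an integer and let $r,s\in(-1,\infty)$ with $r\neq 0$ and $r+s=0$. Then $L,\left(L^*+\frac{r-d}{2}\right)^2$ is a Leonard pair on $\mathcal P_d(\mathbb R)$ (here $L^*+\frac{r-d}{2}$ means $L^*+\frac{r-d}{2}\cdot\mathrm{id}$).
   Context: Write $(x)_i=x(x+1)\cdots(x+i-1)$, with $(x)_0=1$. For $0\le i\le d$ put $\theta_i=(d-i)(d-i+r+s+1)$ and $\theta^*_i=i$; the $\theta_i$ are mutually distinct. Put $b^*_i=\frac{(d-i)(i-d-s)(2d-2i+r+s+2)_i}{(2d-2i+r+s)_{i+1}}$ for $0\le i\le d-1$, $c^*_i=\frac{i(i-d-r-1)(d-i+r+s+1)_{d-i}}{(d-i+r+s+2)_{d-i+1}}$ for $1\le i\le d$, $b^*_d=c^*_0=0$, and $a^*_i=\theta^*_0-b^*_i-c^*_i$ for $0\le i\le d$. Let $\mathcal P_d(\mathbb R)$ be the real vector space of polynomials in $x$ of degree at most $d$; each element is determined by its values at $\theta_0,\dots,\theta_d$. Let $L,L^*$ be the linear maps on $\mathcal P_d(\mathbb R)$ defined by $(Lf)(\theta_i)=\theta_i f(\theta_i)$ and $(L^*f)(\theta_i)=b^*_i f(\theta_{i+1})+a^*_i f(\theta_i)+c^*_i f(\theta_{i-1})$ for $0\le i\le d$ (terms with coefficient $b^*_d$ or $c^*_0$ are omitted). A square matrix is tridiagonal if its nonzero entries lie on the diagonal, subdiagonal or superdiagonal; it is irreducible tridiagonal if moreover all subdiagonal and superdiagonal entries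 are nonzero. A Leonard pair on a nonzero finite-dimensional vector space $V$ is an ordered pair $A,A^*$ of linear maps $V\to V$ such that (1) there is an ordered basis of $V$ in which $A$ is diagonal and $A^*$ is irreducible tridiagonal, and (2) there is an ordered basis of $V$ in which $A^*$ is diagonal and $A$ is irreducible tridiagonal. *)

theory Defs
  imports "HOL-Computational_Algebra.Polynomial"
begin

definition Pd :: "nat \<Rightarrow> real poly set" where
  "Pd d = {p. degree p \<le> d}"

definition theta :: "real \<Rightarrow> real \<Rightarrow> nat \<Rightarrow> nat \<Rightarrow> real" where
  "theta r s d i = (real d - real i) * (real d - real i + r + s + 1)"

definition thetas :: "nat \<Rightarrow> real" where
  "thetas i = real i"

definition bstar :: "real \<Rightarrow> real \<Rightarrow> nat \<Rightarrow> nat \<Rightarrow> real" where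
  "bstar r s d i = (if i < d then
     (real d - real i) * (real i - real d - s) *
       pochhammer (2 * real d - 2 * real i + r + s + 2) i /
       pochhammer (2 * real d - 2 * real i + r + s) (i + 1)
   else 0)"

definition cstar :: "real \<Rightarrow> real \<Rightarrow> nat \<Rightarrow> nat \<Rightarrow> real" where
  "cstar r s d i = (if 1 \<le> i \<and> i \<le> d then
     real i * (real i - real d - r - 1) *
       pochhammer (real d - real i + r + s + 1) (d - i) /
       pochhammer (real d - real i + r + s + 2) (d - i + 1)
   else 0)"

definition astar :: "real \<Rightarrow> real \<Rightarrow> nat \<Rightarrow> nat \<Rightarrow> real" where
  "astar r s d i = thetas 0 - bstar r s d i - cstar r s d i"

definition interp :: "real \<Rightarrow> real \<Rightarrow> nat \<Rightarrow> (nat \<Rightarrow> real) \<Rightarrow> real poly" where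
  "interp r s d v = (\<Sum>i\<le>d. smult (v i)
      (\<Prod>j\<in>{..d} - {i}. smult (1 / (theta r s d i - theta r s d j)) [:- theta r s d j, 1:]))"

definition Lmap :: "real \<Rightarrow> real \<Rightarrow> nat \<Rightarrow> real poly \<Rightarrow> real poly" where
  "Lmap r s d f = interp r s d (\<lambda>i. theta r s d i * poly f (theta r s d i))"

definition Lstar :: "real \<Rightarrow> real \<Rightarrow> nat \<Rightarrow> real poly \<Rightarrow> real poly" where
  "Lstar r s d f = interp r s d (\<lambda>i.
      (if i < d then bstar r s d i * poly f (theta r s d (i + 1)) else 0)
      + astar r s d i * poly f (theta r s d i)
      + (if 0 < i then cstar r s d i * poly f (theta r s d (i - 1)) else 0))"

definition linear_on :: "real poly set \<Rightarrow> (real poly \<Rightarrow> real poly) \<Rightarrow> bool" where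
  "linear_on V A \<longleftrightarrow> (\<forall>v\<in>V. A v \<in> V) \<and>
     (\<forall>u\<in>V. \<forall>v\<in>V. A (u + v) = A u + A v) \<and>
     (\<forall>c. \<forall>v\<in>V. A (smult c v) = smult c (A v))"

definition ordered_basis :: "real poly set \<Rightarrow> nat \<Rightarrow> (nat \<Rightarrow> real poly) \<Rightarrow> bool" where
  "ordered_basis V n B \<longleftrightarrow> (\<forall>i<n. B i \<in> V) \<and>
     (\<forall>v\<in>V. \<exists>!c. (\<forall>i\<ge>n. c i = (0::real)) \<and> v = (\<Sum>i<n. smult (c i) (B i)))"

definition matrix_of :: "nat \<Rightarrow> (nat \<Rightarrow> real poly) \<Rightarrow> (real poly \<Rightarrow> real poly)
     \<Rightarrow> (nat \<Rightarrow> nat \<Rightarrow> real) \<Rightarrow> bool" where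
  "matrix_of n B A M \<longleftrightarrow> (\<forall>j<n. A (B j) = (\<Sum>i<n. smult (M i j) (B i)))"

definition diagonal_mat :: "nat \<Rightarrow> (nat \<Rightarrow> nat \<Rightarrow> real) \<Rightarrow> bool" where
  "diagonal_mat n M \<longleftrightarrow> (\<forall>i<n. \<forall>j<n. i \<noteq> j \<longrightarrow> M i j = 0)"

definition irred_tridiagonal_mat :: "nat \<Rightarrow> (nat \<Rightarrow> nat \<Rightarrow> real) \<Rightarrow> bool" where
  "irred_tridiagonal_mat n M \<longleftrightarrow>
     (\<forall>i<n. \<forall>j<n. (i > j + 1 \<or> j > i + 1) \<longrightarrow> M i j = 0) \<and>
     (\<forall>i. i + 1 < n \<longrightarrow> M (i + 1) i \<noteq> 0 \<and> M i (i + 1) \<noteq> 0)"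

definition leonard_pair :: "real poly set \<Rightarrow> (real poly \<Rightarrow> real poly)
     \<Rightarrow> (real poly \<Rightarrow> real poly) \<Rightarrow> bool" where
  "leonard_pair V A As \<longleftrightarrow> linear_on V A \<and> linear_on V As \<and>
     (\<exists>n B M Ms. ordered_basis V n B \<and> matrix_of n B A M \<and> matrix_of n B As Ms \<and>
        diagonal_mat n M \<and> irred_tridiagonal_mat n Ms) \<and>
     (\<exists>n B M Ms. ordered_basis V n B \<and> matrix_of n B A M \<and> matrix_of n B As Ms \<and>
        diagonal_mat n Ms \<and> irred_tridiagonal_mat n M)"

end

theory Submission
  imports Defs
begin


lemma sg_far_aux:
  fixes q m n d :: nat
  assumes "2 * q \<le> d" "d \<le> 2 * q + 1" "m \<le> d" "n \<le> d" "m > n + 1"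
  defines "f \<equiv> \<lambda>m. (if m \<le> q then d - 2 * (q - m) else d + 2 * q + 1 - 2 * m)"
  shows "f m \<noteq> f n \<and> f n \<noteq> f m + 2 \<and> f m \<noteq> f n + 2 \<and> \<not> (f m + 1 = d \<and> f n = d) \<and> \<not> (f m = d \<and> f n + 1 = d)"
proof (cases "m \<le> q")
  case True
  hence "n \<le> q" using assms by linarith
  thus ?thesis using True assms unfolding f_def by auto
next
  case False
  show ?thesis
  proof (cases "n \<le> q")
    case True
    have fm: "f m = d + 2 * q + 1 - 2 * m" "f n = d - 2 * (q - n)" using True False unfolding f_def by auto
    have a: "f m + 2 * m = d + 2 * q + 1" using fm assms(1-5) by linarith
    have b: "f n + 2 * q = d + 2 * n" using fm assms(1-5) True by linarith
    have par: "\<And>x y::nat. 2 * x \<noteq> 2 * y + 1" by presburger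
    have "f m \<noteq> f n"
    proof
      assume "f m = f n" hence "2 * (m + n) = 2 * (2 * q) + 1" using a b by simp
      thus False using par by blast
    qed
    moreover have "f n \<noteq> f m + 2"
    proof
      assume "f n = f m + 2" hence "2 * (m + n) = 2 * (2 * q + 1) + 1" using a b by simp
      thus False using par by blast
    qed
    moreover have "f m \<noteq> f n + 2"
    proof
      assume "f m = f n + 2" hence "2 * (m + n + 1) = 2 * (2 * q) + 1" using a b by simp
      thus False using par by blast
    qed
    moreover have "\<not> (f m + 1 = d \<and> f n = d)" using a b assms(5) by linarith
    moreover have "\<not> (f m = d \<and> f n + 1 = d)"
    proof
      assume "f m = d \<and> f n + 1 = d" hence "2 * m = 2 * q + 1" using a b by simp
      thus False using par by blast
    qed
    ultimately show ?thesis by blast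
  next
    case False
    thus ?thesis using \<open>\<not> m \<le> q\<close> assms unfolding f_def by auto
  qed
qed

lemma sg_adj_aux:
  fixes q m d :: nat
  assumes "2 * q \<le> d" "d \<le> 2 * q + 1" "m + 1 \<le> d"
  defines "f \<equiv> \<lambda>m. (if m \<le> q then d - 2 * (q - m) else d + 2 * q + 1 - 2 * m)"
  shows "f (m + 1) = f m + 2 \<or> (f m = d \<and> f (m + 1) + 1 = d) \<or> f m = f (m + 1) + 2"
proof (cases "m < q")
  case True
  then obtain k where q: "q = Suc (m + k)" using less_iff_Suc_add by blast
  have e1: "f m = d - 2 * Suc k" "f (m + 1) = d - 2 * k" using True unfolding f_def q by auto
  show ?thesis using e1 assms(1) unfolding q by auto
next
  case False
  show ?thesis
  proof (cases "m = q")
    case True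
    have e1: "f m = d - 2 * (q - m)" "f (m + 1) = d + 2 * q + 1 - 2 * (m + 1)" using True unfolding f_def by auto
    have "f m = d" using e1 True by simp
    moreover have "f (m + 1) + 1 = d" using e1 True assms(1-3) by simp
    ultimately show ?thesis by blast
  next
    case False
    have e1: "f m = d + 2 * q + 1 - 2 * m" "f (m + 1) = d + 2 * q + 1 - (2 * m + 2)"
      using False \<open>\<not> m < q\<close> unfolding f_def by auto
    have "f m + 2 * m = d + 2 * q + 1" using e1(1) assms(1-3) by linarith
    moreover have "f (m + 1) + (2 * m + 2) = d + 2 * q + 1" using e1(2) assms(1-3) by linarith
    ultimately show ?thesis by linarith
  qed
qed

primrec phi :: "nat \<Rightarrow> real poly" where
  "phi 0 = 1"
| "phi (Suc k) = phi k * [:- (real k * (real k + 1)), 1:]"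

lemma phi_deg_lc: "degree (phi k) = k \<and> coeff (phi k) k = 1"
proof (induction k)
  case 0 thus ?case by simp
next
  case (Suc k)
  have nz: "phi k \<noteq> 0" using Suc by auto
  have "degree (phi (Suc k)) = Suc k" unfolding phi.simps(2) by (subst degree_mult_eq) (use nz Suc in auto)
  moreover have "lead_coeff (phi (Suc k)) = 1" unfolding phi.simps(2) lead_coeff_mult using Suc by simp
  ultimately show ?case by simp
qed

lemma degree_phi: "degree (phi k) = k" using phi_deg_lc by blast
lemma coeff_phi: "coeff (phi k) k = 1" using phi_deg_lc by blast

definition "FF k y = poly (phi k) (y * (y + 1))"

lemma FF_Suc: "FF (Suc m) y = FF m y * (y - real m) * (y + real m + 1)"
  unfolding FF_def by (simp add: algebra_simps)

lemma FF_Suc_minus: "FF (Suc m) (y - 1) = FF m y * (y - real m) * (y - real m - 1)"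
proof (induction m)
  case 0 thus ?case by (simp add: FF_def algebra_simps)
next
  case (Suc m)
  have "FF (Suc (Suc m)) (y - 1) = FF (Suc m) (y - 1) * (y - 1 - real (Suc m)) * (y - 1 + real (Suc m) + 1)"
    by (rule FF_Suc)
  also have "\<dots> = FF m y * (y - real m) * (y - real m - 1) * (y - 1 - real (Suc m)) * (y - 1 + real (Suc m) + 1)"
    by (simp only: Suc)
  also have "\<dots> = FF (Suc m) y * (y - real (Suc m)) * (y - real (Suc m) - 1)"
    by (simp add: FF_Suc algebra_simps)
  finally show ?case .
qed

lemma FF_Suc_plus: "FF (Suc m) (y + 1) = FF m y * (y + real m + 1) * (y + real m + 2)"
proof (induction m)
  case 0 thus ?case by (simp add: FF_def algebra_simps)
next
  case (Suc m)
  have "FF (Suc (Suc m)) (y + 1) = FF (Suc m) (y + 1) * (y + 1 - real (Suc m)) * (y + 1 + real (Suc m) + 1)"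
    by (rule FF_Suc)
  also have "\<dots> = FF m y * (y + real m + 1) * (y + real m + 2) * (y + 1 - real (Suc m)) * (y + 1 + real (Suc m) + 1)"
    by (simp only: Suc)
  also have "\<dots> = FF (Suc m) y * (y + real (Suc m) + 1) * (y + real (Suc m) + 2)"
    by (simp add: FF_Suc algebra_simps)
  finally show ?case .
qed

locale LP =
  fixes r s :: real and d :: nat
  assumes rgt: "r > -1" and sgt: "s > -1" and rnz: "r \<noteq> 0" and rs: "r + s = 0"
begin

abbreviation th where "th \<equiv> theta r s d"

lemma th_eq: "th i = (real d - real i) * (real d - real i + 1)"
proof -
  have "real d - real i + r + s + 1 = real d - real i + 1" using rs by linarith
  thus ?thesis by (simp add: theta_def)
qed

lemma th_less: assumes "i < j" "j \<le> d" shows "th j < th i"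
proof -
  have a: "real d - real j \<ge> 0" "real d - real i > real d - real j" using assms by auto
  have "(real d - real j) * (real d - real j + 1) < (real d - real i) * (real d - real i + 1)"
    using a by (intro mult_strict_mono) auto
  thus ?thesis by (simp add: th_eq)
qed

lemma th_inj: assumes "i \<le> d" "j \<le> d" "th i = th j" shows "i = j"
  using th_less[of i j] th_less[of j i] assms by (cases "i < j"; cases "j < i") auto

lemma th_Suc_d: "th (Suc d) = th d"
  by (simp add: th_eq)

lemma card_th: "card (th ` {..d}) = Suc d"
proof -
  have "inj_on th {..d}" using th_inj by (auto simp: inj_on_def)
  thus ?thesis by (simp add: card_image)
qed

lemma poly_eq_th:
  assumes "degree p \<le> d" "degree q \<le> d" "\<And>k. k \<le> d \<Longrightarrow> poly p (th k) = poly q (th k)"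
  shows "p = q"
  by (rule poly_eqI_degree[of "th ` {..d}"]) (use assms card_th in auto)

lemma degree_interp: "degree (interp r s d v) \<le> d"
  unfolding interp_def
proof (intro degree_sum_le)
  fix i assume "i \<in> {..d}"
  have "degree (\<Prod>j\<in>{..d} - {i}. smult (1 / (th i - th j)) [:- th j, 1:]) \<le> 
        sum (degree \<circ> (\<lambda>j. smult (1 / (th i - th j)) [:- th j, 1:])) ({..d} - {i})"
    by (rule degree_prod_sum_le) auto
  also have "\<dots> \<le> sum (\<lambda>j. 1) ({..d} - {i})"
    by (intro sum_mono) auto
  also have "\<dots> = d" using \<open>i \<in> {..d}\<close> by simp
  finally show "degree (smult (v i) (\<Prod>j\<in>{..d} - {i}. smult (1 / (th i - th j)) [:- th j, 1:])) \<le> d"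
    using degree_smult_le order_trans by blast
qed auto

lemma poly_interp: assumes "k \<le> d" shows "poly (interp r s d v) (th k) = v k"
proof -
  have "poly (interp r s d v) (th k) = (\<Sum>i\<le>d. v i * (\<Prod>j\<in>{..d} - {i}. (th k - th j) / (th i - th j)))"
    unfolding interp_def by (simp add: poly_sum poly_prod diff_divide_distrib)
  also have "\<dots> = (\<Sum>i\<le>d. if i = k then v k else 0)"
  proof (intro sum.cong refl)
    fix i assume i: "i \<in> {..d}"
    show "v i * (\<Prod>j\<in>{..d} - {i}. (th k - th j) / (th i - th j)) = (if i = k then v k else 0)"
    proof (cases "i = k")
      case True
      have "(\<Prod>j\<in>{..d} - {i}. (th k - th j) / (th i - th j)) = (\<Prod>j\<in>{..d} - {i}. 1)"
        using True th_inj i by (intro prod.cong refl) auto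
      thus ?thesis using True by simp
    next
      case False
      have "(\<Prod>j\<in>{..d} - {i}. (th k - th j) / (th i - th j)) = 0"
        using False assms by (intro prod_zero) (auto intro!: bexI[where x=k])
      thus ?thesis using False by simp
    qed
  qed
  also have "\<dots> = v k" using assms by simp
  finally show ?thesis .
qed

lemma interp_cong: "(\<And>i. i \<le> d \<Longrightarrow> v i = w i) \<Longrightarrow> interp r s d v = interp r s d w"
  unfolding interp_def by (intro sum.cong) auto

lemma interp_poly: assumes "degree p \<le> d" shows "interp r s d (\<lambda>i. poly p (th i)) = p"
  by (rule poly_eq_th) (use assms degree_interp poly_interp in auto)

lemma interp_eqI: assumes "degree p \<le> d" "\<And>i. i \<le> d \<Longrightarrow> v i = poly p (th i)"
  shows "interp r s d v = p"
  using interp_cong[of v "\<lambda>i. poly p (th i)"] interp_poly[OF assms(1)] assms(2) by simp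

lemma interp_add: "interp r s d (\<lambda>i. v i + w i) = interp r s d v + interp r s d w"
  unfolding interp_def by (simp add: smult_add_left sum.distrib)

lemma smult_sum2: "smult c (\<Sum>i\<in>S. f i) = (\<Sum>i\<in>S. smult c (f i))"
  by (induction S rule: infinite_finite_induct) (auto simp: smult_add_right)

lemma interp_smult: "interp r s d (\<lambda>i. c * v i) = smult c (interp r s d v)"
  unfolding interp_def by (simp add: smult_sum2 smult_smult)

lemma poch_ratio1:
  fixes z :: real assumes "z > 0"
  shows "pochhammer (z + 2) n / pochhammer z (n + 1) = (z + real n + 1) / (z * (z + 1))"
proof -
  have e1: "pochhammer z (n + 2) = z * (z + 1) * pochhammer (z + 2) n"
    by (simp add: pochhammer_rec numeral_2_eq_2 add.assoc)
  have e2: "pochhammer z (n + 2) = (z + real n + 1) * pochhammer z (n + 1)"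
    using pochhammer_rec'[of z "n+1"] by (simp add: numeral_2_eq_2 add.assoc)
  have nz: "pochhammer z (n + 1) > 0" using assms by (intro pochhammer_pos)
  from e1 e2 have "z * (z + 1) * pochhammer (z + 2) n = (z + real n + 1) * pochhammer z (n + 1)" by simp
  moreover have "z * (z + 1) \<noteq> 0" using assms by simp
  ultimately show ?thesis using nz by (subst frac_eq_eq) (auto simp: algebra_simps)
qed

lemma poch_ratio2:
  fixes m :: nat
  shows "pochhammer (real m + 1) m / pochhammer (real m + 2) (m + 1) = 1 / (2 * (2 * real m + 1))"
proof -
  have e1: "pochhammer (real m + 1) (m + 2) = (real m + 1) * pochhammer (real m + 2) (m + 1)"
    by (simp add: pochhammer_rec numeral_2_eq_2 add.assoc)
  have e2: "pochhammer (real m + 1) (m + 2) = (2 * real m + 2) * (2 * real m + 1) * pochhammer (real m + 1) m"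
    using pochhammer_rec'[of "real m + 1" "m+1"] pochhammer_rec'[of "real m + 1" "m"]
    by (simp add: numeral_2_eq_2 algebra_simps)
  have nz: "pochhammer (real m + 2) (m + 1) > 0" by (intro pochhammer_pos) auto
  from e1 e2 have "(real m + 1) * pochhammer (real m + 2) (m + 1) = (2 * real m + 2) * (2 * real m + 1) * pochhammer (real m + 1) m" by simp
  hence "(real m + 1) * pochhammer (real m + 2) (m + 1) = (real m + 1) * (2 * (2 * real m + 1) * pochhammer (real m + 1) m)"
    by (simp add: algebra_simps)
  hence "pochhammer (real m + 2) (m + 1) = 2 * (2 * real m + 1) * pochhammer (real m + 1) m"
    by (subst (asm) mult_left_cancel) auto
  moreover have "pochhammer (real m + 1) m > 0" by (intro pochhammer_pos) auto
  ultimately show ?thesis by simp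
qed

definition "BB y = (r - y) * (y + real d + 1) / (2 * (2 * y + 1))"
definition "CC y = - (real d - y) * (y + r + 1) / (2 * (2 * y + 1))"
abbreviation "YY i \<equiv> real d - real i"

lemma BB_alt: assumes "y > 0" shows "y * (r - y) * ((y + real d + 1) / (2 * y * (2 * y + 1))) = BB y"
proof -
  have "y * (r - y) * ((y + real d + 1) / (2 * y * (2 * y + 1))) = (y * (r - y) * (y + real d + 1)) / (2 * y * (2 * y + 1))"
    by simp
  also have "\<dots> = BB y"
  proof -
    have n1: "2 * y * (2 * y + 1) \<noteq> 0" and n2: "2 * (2 * y + 1) \<noteq> 0" using assms by auto
    show ?thesis unfolding BB_def by (subst frac_eq_eq[OF n1 n2]) (simp add: algebra_simps)
  qed
  finally show ?thesis .
qed

lemma bstar_eq: assumes "i < d" shows "bstar r s d i = BB (YY i)"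
proof -
  have Y: "YY i \<ge> 1" using assms by auto
  have z1: "2 * real d - 2 * real i + r + s + 2 = 2 * YY i + 2" and z2: "2 * real d - 2 * real i + r + s = 2 * YY i"
    using rs by auto
  have q: "pochhammer (2 * real d - 2 * real i + r + s + 2) i / pochhammer (2 * real d - 2 * real i + r + s) (i + 1)
     = (2 * YY i + real i + 1) / (2 * YY i * (2 * YY i + 1))"
    unfolding z1 z2 by (rule poch_ratio1) (use Y in auto)
  have "bstar r s d i = YY i * (real i - real d - s) * (pochhammer (2 * real d - 2 * real i + r + s + 2) i / pochhammer (2 * real d - 2 * real i + r + s) (i + 1))"
    using assms by (simp add: bstar_def)
  also have "\<dots> = YY i * (real i - real d - s) * ((2 * YY i + real i + 1) / (2 * YY i * (2 * YY i + 1)))"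
    by (simp only: q)
  also have "\<dots> = YY i * (r - YY i) * ((YY i + real d + 1) / (2 * YY i * (2 * YY i + 1)))"
  proof -
    have f1: "real i - real d - s = r - YY i" using rs by simp
    have f2: "2 * YY i + real i + 1 = YY i + real d + 1" by simp
    show ?thesis by (simp only: f1 f2)
  qed
  also have "\<dots> = BB (YY i)" using Y by (intro BB_alt) auto
  finally show ?thesis .
qed

lemma cstar_eq: assumes "1 \<le> i" "i \<le> d" shows "cstar r s d i = CC (YY i)"
proof -
  define m where "m = d - i"
  have Y: "YY i = real m" using assms by (simp add: m_def)
  have z1: "real d - real i + r + s + 1 = real m + 1" and z2: "real d - real i + r + s + 2 = real m + 2"
    using rs Y by linarith+
  have z3: "d - i = m" by (simp add: m_def)
  have q: "pochhammer (real d - real i + r + s + 1) (d - i) / pochhammer (real d - real i + r + s + 2) (d - i + 1)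
     = 1 / (2 * (2 * real m + 1))"
    unfolding z1 z2 z3 by (rule poch_ratio2)
  have "cstar r s d i = real i * (real i - real d - r - 1) * (pochhammer (real d - real i + r + s + 1) (d - i) / pochhammer (real d - real i + r + s + 2) (d - i + 1))"
    using assms by (simp add: cstar_def)
  also have "\<dots> = real i * (real i - real d - r - 1) * (1 / (2 * (2 * real m + 1)))"
    by (simp only: q)
  also have "\<dots> = (real i * (real i - real d - r - 1)) / (2 * (2 * YY i + 1))"
    by (simp add: Y)
  also have "real i * (real i - real d - r - 1) = - (real d - YY i) * (YY i + r + 1)"
    by (simp add: algebra_simps)
  also have "- (real d - YY i) * (YY i + r + 1) / (2 * (2 * YY i + 1)) = CC (YY i)"
    unfolding CC_def ..
  finally show ?thesis .
qed

lemma cstar0: "cstar r s d 0 = CC (YY 0)" by (simp add: cstar_def CC_def)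
lemma bstar_d: "bstar r s d d = 0" by (simp add: bstar_def)

lemma r_lt1: "r < 1" using sgt rs by linarith

lemma bstar_neg: assumes "i < d" shows "bstar r s d i < 0"
proof -
  have Y: "YY i \<ge> 1" using assms by auto
  have "(r - YY i) * (YY i + real d + 1) < 0" using Y r_lt1 by (intro mult_neg_pos) auto
  thus ?thesis using Y by (simp add: bstar_eq[OF assms] BB_def divide_neg_pos)
qed

lemma cstar_neg: assumes "1 \<le> i" "i \<le> d" shows "cstar r s d i < 0"
proof -
  have Y: "YY i \<ge> 0" "real d - YY i \<ge> 1" using assms by auto
  have "(real d - YY i) * (YY i + r + 1) > 0" using Y rgt by (intro mult_pos_pos) auto
  thus ?thesis using Y by (simp add: cstar_eq[OF assms] CC_def divide_neg_pos)
qed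

definition "kap = (r - real d) / 2"

lemma BC_sum: assumes "y \<ge> 0" shows "BB y + CC y = (r - real d) / 2"
proof -
  have "BB y + CC y = ((r-y)*(y+real d+1) + (-(real d-y))*(y+r+1))/(2*(2*y+1))"
    unfolding BB_def CC_def by (rule add_divide_distrib[symmetric])
  also have "(r-y)*(y+real d+1) + (-(real d-y))*(y+r+1) = (r - real d) * (2*y+1)" by (simp add: algebra_simps)
  also have "(r - real d) * (2*y+1) / (2*(2*y+1)) = (r - real d)/2"
  proof -
    have "2*y+1 \<noteq> 0" using assms by simp
    thus ?thesis by (metis mult.commute mult_divide_mult_cancel_right)
  qed
  finally show ?thesis .
qed

lemma astar_lt: assumes "i < d" shows "astar r s d i + kap = 0"
proof -
  have Y: "YY i \<ge> 1" using assms by auto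
  have "astar r s d i = - BB (YY i) - CC (YY i)"
    using assms by (cases "i = 0") (auto simp: astar_def thetas_def bstar_eq cstar_eq cstar0)
  also have "\<dots> = (real d - r) / 2" using BC_sum[of "YY i"] Y by simp
  finally show ?thesis unfolding kap_def by (simp add: diff_divide_distrib)
qed

lemma astar_d: "astar r s d d + kap = r * (real d + 1) / 2"
proof (cases "d = 0")
  case True thus ?thesis unfolding kap_def by (simp add: astar_def thetas_def bstar_def cstar_def kap_def)
next
  case False
  hence "astar r s d d = - CC 0" by (simp add: astar_def thetas_def bstar_d cstar_eq)
  moreover have "CC 0 = - (real d * (r + 1)) / 2" by (simp add: CC_def)
  ultimately have "astar r s d d = real d * (r + 1) / 2" by simp
  thus ?thesis unfolding kap_def by (simp add: field_simps)
qed

abbreviation "bs \<equiv> bstar r s d"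
abbreviation "cs \<equiv> cstar r s d"
definition "al l = astar r s d l + kap"

definition "LSv f k = (if k < d then bs k * poly f (th (k + 1)) else 0)
      + astar r s d k * poly f (th k)
      + (if 0 < k then cs k * poly f (th (k - 1)) else 0)"

lemma Lstar_alt: "Lstar r s d f = interp r s d (LSv f)"
  unfolding Lstar_def LSv_def ..

lemma poly_Lstar: "k \<le> d \<Longrightarrow> poly (Lstar r s d f) (th k) = LSv f k"
  unfolding Lstar_alt by (rule poly_interp)

lemma poly_Lmap: "k \<le> d \<Longrightarrow> poly (Lmap r s d f) (th k) = th k * poly f (th k)"
  unfolding Lmap_def by (rule poly_interp)

lemma degree_Lstar: "degree (Lstar r s d f) \<le> d"
  unfolding Lstar_alt by (rule degree_interp)

lemma degree_Lmap: "degree (Lmap r s d f) \<le> d"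
  unfolding Lmap_def by (rule degree_interp)

lemma Lstar_add: "Lstar r s d (f + g) = Lstar r s d f + Lstar r s d g"
proof -
  have "LSv (f + g) = (\<lambda>k. LSv f k + LSv g k)"
    by (auto simp: LSv_def algebra_simps)
  thus ?thesis unfolding Lstar_alt by (simp add: interp_add)
qed

lemma Lstar_smult: "Lstar r s d (smult c f) = smult c (Lstar r s d f)"
proof -
  have "LSv (smult c f) = (\<lambda>k. c * LSv f k)"
    by (auto simp: LSv_def algebra_simps)
  thus ?thesis unfolding Lstar_alt by (simp add: interp_smult)
qed

lemma Lmap_add: "Lmap r s d (f + g) = Lmap r s d f + Lmap r s d g"
  unfolding Lmap_def by (simp add: algebra_simps interp_add)

lemma Lmap_smult: "Lmap r s d (smult c f) = smult c (Lmap r s d f)"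
proof -
  have "(\<lambda>i. th i * poly (smult c f) (th i)) = (\<lambda>i. c * (th i * poly f (th i)))"
    by (auto simp: algebra_simps)
  thus ?thesis unfolding Lmap_def by (simp add: interp_smult)
qed

definition "AS f = (let g = Lstar r s d f + smult kap f in Lstar r s d g + smult kap g)"

lemma AS_add: "AS (f + g) = AS f + AS g"
  unfolding AS_def Let_def by (simp add: Lstar_add Lstar_smult smult_add_right algebra_simps)

lemma AS_smult: "AS (smult c f) = smult c (AS f)"
  unfolding AS_def Let_def by (simp add: Lstar_add Lstar_smult smult_add_right algebra_simps)

lemma degree_AS: "degree (AS f) \<le> d" if "degree f \<le> d"
proof -
  have "degree (Lstar r s d f + smult kap f) \<le> d"
    using that degree_Lstar by (intro degree_add_le) (auto intro: order_trans[OF degree_smult_le])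
  thus ?thesis unfolding AS_def Let_def
    using degree_Lstar by (intro degree_add_le) (auto intro: order_trans[OF degree_smult_le])
qed

lemma linear_on_Lmap: "linear_on (Pd d) (Lmap r s d)"
  unfolding linear_on_def Pd_def using degree_Lmap Lmap_add Lmap_smult by auto

lemma linear_on_AS: "linear_on (Pd d) AS"
  unfolding linear_on_def Pd_def using degree_AS AS_add AS_smult by auto

lemma poly_AS: assumes "k \<le> d"
  shows "poly (AS f) (th k) =
     (if k < d then bs k * (LSv f (k+1) + kap * poly f (th (k+1))) else 0)
     + al k * (LSv f k + kap * poly f (th k))
     + (if 0 < k then cs k * (LSv f (k-1) + kap * poly f (th (k-1))) else 0)"
  using assms unfolding AS_def Let_def al_def
  by (simp add: poly_Lstar LSv_def[of "Lstar r s d f + smult kap f"] poly_Lstar algebra_simps)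

definition "dl j = interp r s d (\<lambda>i. if i = j then 1 else 0)"

lemma poly_dl: "k \<le> d \<Longrightarrow> poly (dl j) (th k) = (if k = j then 1 else 0)"
  unfolding dl_def by (rule poly_interp)

lemma degree_dl: "degree (dl j) \<le> d"
  unfolding dl_def by (rule degree_interp)

definition "sg m = (if m \<le> d div 2 then d - 2 * (d div 2 - m) else d + 2 * (d div 2) + 1 - 2 * m)"

lemma sg_le: "m \<le> d \<Longrightarrow> sg m \<le> d"
proof (cases "m \<le> d div 2")
  case True thus ?thesis unfolding sg_def by simp
next
  case False
  hence "d + 2 * (d div 2) + 1 - 2 * m \<le> d" by linarith
  thus ?thesis using False unfolding sg_def by simp
qed

lemma d2: "2 * (d div 2) \<le> d" "d \<le> 2 * (d div 2) + 1" by presburger+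

lemma sg_far: "m \<le> d \<Longrightarrow> n \<le> d \<Longrightarrow> m > n + 1 \<Longrightarrow>
  sg m \<noteq> sg n \<and> sg n \<noteq> sg m + 2 \<and> sg m \<noteq> sg n + 2 \<and> \<not> (sg m + 1 = d \<and> sg n = d) \<and> \<not> (sg m = d \<and> sg n + 1 = d)"
  unfolding sg_def using sg_far_aux[of "d div 2" d m n] d2 by simp

lemma sg_adj: "m + 1 \<le> d \<Longrightarrow> sg (m + 1) = sg m + 2 \<or> (sg m = d \<and> sg (m + 1) + 1 = d) \<or> sg m = sg (m + 1) + 2"
  unfolding sg_def using sg_adj_aux[of "d div 2" d m] d2 by simp

lemma sg_inj: assumes "m \<le> d" "n \<le> d" "sg m = sg n" shows "m = n"
proof (rule ccontr)
  assume "m \<noteq> n"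
  hence "m > n + 1 \<or> n > m + 1 \<or> m = n + 1 \<or> n = m + 1" by auto
  thus False using sg_far[of m n] sg_far[of n m] sg_adj[of n] sg_adj[of m] assms by auto
qed

lemma sg_bij: "bij_betw sg {..<Suc d} {..<Suc d}"
proof -
  have inj: "inj_on sg {..<Suc d}"
  proof (rule inj_onI)
    fix x y assume "x \<in> {..<Suc d}" "y \<in> {..<Suc d}" "sg x = sg y"
    thus "x = y" using sg_inj[of x y] by simp
  qed
  have "sg ` {..<Suc d} \<subseteq> {..<Suc d}"
  proof (rule image_subsetI)
    fix x assume "x \<in> {..<Suc d}"
    thus "sg x \<in> {..<Suc d}" using sg_le[of x] by simp
  qed
  hence "sg ` {..<Suc d} = {..<Suc d}" using inj by (intro endo_inj_surj) auto
  thus ?thesis using inj by (simp add: bij_betw_def)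
qed

lemma sg_surj: "k \<le> d \<Longrightarrow> \<exists>m\<le>d. sg m = k"
proof -
  assume "k \<le> d"
  hence "k \<in> sg ` {..<Suc d}" using sg_bij by (auto simp: bij_betw_def)
  thus ?thesis by (auto simp: less_Suc_eq_le)
qed

abbreviation "B1 m \<equiv> dl (sg m)"

lemma coord1: assumes "m \<le> d"
  shows "poly (\<Sum>i<Suc d. smult (c i) (B1 i)) (th (sg m)) = c m"
proof -
  have "poly (\<Sum>i<Suc d. smult (c i) (B1 i)) (th (sg m)) = (\<Sum>i<Suc d. c i * (if sg m = sg i then 1 else 0))"
    using assms sg_le by (simp add: poly_sum poly_dl)
  also have "\<dots> = (\<Sum>i<Suc d. if i = m then c m else 0)"
    using assms sg_inj by (intro sum.cong) auto
  also have "\<dots> = c m" using assms by simp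
  finally show ?thesis .
qed

lemma degree_sum_B1: "degree (\<Sum>i<Suc d. smult (c i) (B1 i)) \<le> d"
  by (intro degree_sum_le) (auto intro: order_trans[OF degree_smult_le] degree_dl)

lemma expand1: assumes "degree v \<le> d"
  shows "v = (\<Sum>i<Suc d. smult (poly v (th (sg i))) (B1 i))"
proof (rule poly_eq_th[OF assms degree_sum_B1])
  fix k assume "k \<le> d"
  then obtain m where "m \<le> d" "sg m = k" using sg_surj by blast
  thus "poly v (th k) = poly (\<Sum>i<Suc d. smult (poly v (th (sg i))) (B1 i)) (th k)"
    using coord1[of m "\<lambda>i. poly v (th (sg i))"] by simp
qed

lemma ob1: "ordered_basis (Pd d) (Suc d) B1"
  unfolding ordered_basis_def
proof (intro conjI ballI allI impI)
  fix i show "B1 i \<in> Pd d" using degree_dl by (simp add: Pd_def)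
next
  fix v assume v: "v \<in> Pd d"
  let ?c = "\<lambda>i. if i < Suc d then poly v (th (sg i)) else 0"
  show "\<exists>!c. (\<forall>i\<ge>Suc d. c i = 0) \<and> v = (\<Sum>i<Suc d. smult (c i) (B1 i))"
  proof (rule ex1I[of _ ?c])
    have "v = (\<Sum>i<Suc d. smult (poly v (th (sg i))) (B1 i))" using v expand1 by (simp add: Pd_def)
    also have "\<dots> = (\<Sum>i<Suc d. smult (?c i) (B1 i))" by (intro sum.cong) auto
    finally show "(\<forall>i\<ge>Suc d. ?c i = 0) \<and> v = (\<Sum>i<Suc d. smult (?c i) (B1 i))" by auto
  next
    fix c assume c: "(\<forall>i\<ge>Suc d. c i = 0) \<and> v = (\<Sum>i<Suc d. smult (c i) (B1 i))"
    show "c = ?c"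
    proof
      fix i show "c i = ?c i"
        using c coord1[of i c] by (cases "i < Suc d") auto
    qed
  qed
qed

lemma matrix1: assumes "\<And>f. degree f \<le> d \<Longrightarrow> degree (X f) \<le> d"
  shows "matrix_of (Suc d) B1 X (\<lambda>i j. poly (X (B1 j)) (th (sg i)))"
  unfolding matrix_of_def using expand1 assms degree_dl by blast

lemma diag1: "diagonal_mat (Suc d) (\<lambda>i j. poly (Lmap r s d (B1 j)) (th (sg i)))"
  unfolding diagonal_mat_def using sg_le sg_inj by (auto simp: poly_Lmap poly_dl)

definition "rho = r * (real d + 1) / 2"

lemma rho_nz: "rho \<noteq> 0" using rnz by (simp add: rho_def)

lemma al_eq: "l \<le> d \<Longrightarrow> al l = (if l = d then rho else 0)"
  using astar_lt astar_d by (auto simp: al_def rho_def)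

definition "Sv l j = (if l < d \<and> l + 1 = j then bs l else 0) + (if l = j then al l else 0)
   + (if 0 < l \<and> l - 1 = j then cs l else 0)"

lemma Sv_eq: assumes "l \<le> d" shows "LSv (dl j) l + kap * poly (dl j) (th l) = Sv l j"
  using assms unfolding LSv_def Sv_def al_def by (auto simp: poly_dl algebra_simps)

definition "V k j = (if k < d then bs k * Sv (k+1) j else 0) + al k * Sv k j + (if 0 < k then cs k * Sv (k-1) j else 0)"

lemma poly_AS_dl: assumes "k \<le> d" shows "poly (AS (dl j)) (th k) = V k j"
  unfolding V_def poly_AS[OF assms] using assms by (simp add: Sv_eq)

lemma V_zero: assumes "k \<le> d" "j \<le> d" "k \<noteq> j" "j \<noteq> k + 2" "k \<noteq> j + 2" "\<not> (k + 1 = d \<and> j = d)" "\<not> (k = d \<and> j + 1 = d)"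
  shows "V k j = 0"
proof -
  have t1: "Sv (k+1) j = 0" if "k < d"
  proof -
    have "al (k+1) = (if k + 1 = d then rho else 0)" using that by (intro al_eq) auto
    thus ?thesis using that assms unfolding Sv_def by auto
  qed
  have t2: "al k * Sv k j = 0"
  proof (cases "k = d")
    case True
    thus ?thesis using assms unfolding Sv_def by auto
  next
    case False
    thus ?thesis using assms al_eq[of k] by simp
  qed
  have t3: "Sv (k-1) j = 0" if "0 < k"
  proof -
    have "al (k-1) = 0" using that assms al_eq[of "k-1"] by auto
    thus ?thesis using that assms unfolding Sv_def by auto
  qed
  have u1: "(if k < d then bs k * Sv (k+1) j else 0) = 0" using t1 by simp
  have u3: "(if 0 < k then cs k * Sv (k-1) j else 0) = 0" using t3 by simp
  show ?thesis unfolding V_def u1 u3 t2 by simp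
qed

lemma V_nz: assumes "k \<le> d" "j \<le> d" "j = k + 2 \<or> k = j + 2 \<or> (k + 1 = d \<and> j = d) \<or> (k = d \<and> j + 1 = d)"
  shows "V k j \<noteq> 0"
  using assms(3)
proof (elim disjE)
  assume a: "j = k + 2"
  hence "V k j = bs k * bs (k+1)" using assms unfolding V_def Sv_def by (auto simp: al_eq)
  moreover have "bs k * bs (k+1) > 0" using bstar_neg[of k] bstar_neg[of "k+1"] a assms by (intro mult_neg_neg) auto
  ultimately show ?thesis by linarith
next
  assume a: "k = j + 2"
  hence "V k j = cs k * cs (k-1)" using assms unfolding V_def Sv_def by (auto simp: al_eq)
  moreover have "cs k * cs (k-1) > 0" using cstar_neg[of k] cstar_neg[of "k-1"] a assms by (intro mult_neg_neg) auto
  ultimately show ?thesis by linarith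
next
  assume a: "k + 1 = d \<and> j = d"
  hence "V k j = bs k * rho" using assms unfolding V_def Sv_def by (auto simp: al_eq)
  moreover have "bs k \<noteq> 0" using bstar_neg[of k] a by auto
  ultimately show ?thesis using rho_nz by simp
next
  assume a: "k = d \<and> j + 1 = d"
  hence "V k j = rho * cs k" using assms unfolding V_def Sv_def by (auto simp: al_eq)
  moreover have "cs k \<noteq> 0" using cstar_neg[of k] a by auto
  ultimately show ?thesis using rho_nz by simp
qed

lemma tri1: "irred_tridiagonal_mat (Suc d) (\<lambda>i j. poly (AS (B1 j)) (th (sg i)))"
  unfolding irred_tridiagonal_mat_def
proof (intro conjI allI impI)
  fix i j assume ij: "i < Suc d" "j < Suc d" "j + 1 < i \<or> i + 1 < j"
  have si: "sg i \<le> d" "sg j \<le> d" using ij sg_le by auto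
  show "poly (AS (B1 j)) (th (sg i)) = 0"
    unfolding poly_AS_dl[OF si(1)] using ij(3)
  proof
    assume "j + 1 < i"
    thus "V (sg i) (sg j) = 0" using sg_far[of i j] ij si by (intro V_zero) auto
  next
    assume "i + 1 < j"
    thus "V (sg i) (sg j) = 0" using sg_far[of j i] ij si by (intro V_zero) auto
  qed
next
  fix i assume i: "i + 1 < Suc d"
  have si: "sg i \<le> d" "sg (i+1) \<le> d" using i sg_le by auto
  show "poly (AS (B1 i)) (th (sg (i + 1))) \<noteq> 0"
    unfolding poly_AS_dl[OF si(2)] using sg_adj[of i] i si by (intro V_nz) auto
  show "poly (AS (B1 (i + 1))) (th (sg i)) \<noteq> 0"
    unfolding poly_AS_dl[OF si(1)] using sg_adj[of i] i si by (intro V_nz) auto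
qed

lemma th_Y: "th i = YY i * (YY i + 1)"
  by (simp add: th_eq)

lemma th_Y_Suc: "th (i + 1) = (YY i - 1) * ((YY i - 1) + 1)"
  by (simp add: th_eq algebra_simps)

lemma th_Y_pred: "0 < i \<Longrightarrow> th (i - 1) = (YY i + 1) * ((YY i + 1) + 1)"
  by (simp add: th_eq of_nat_diff algebra_simps)

lemma LSv_alt: assumes "i \<le> d"
  shows "LSv f i = BB (YY i) * (poly f ((YY i - 1) * ((YY i - 1) + 1)) - poly f (YY i * (YY i + 1)))
                 + CC (YY i) * (poly f ((YY i + 1) * ((YY i + 1) + 1)) - poly f (YY i * (YY i + 1)))"
proof -
  have A: "(if i < d then bs i * poly f (th (i + 1)) else 0) - bs i * poly f (th i)
      = BB (YY i) * (poly f ((YY i - 1) * ((YY i - 1) + 1)) - poly f (YY i * (YY i + 1)))"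
  proof (cases "i < d")
    case True thus ?thesis by (simp add: bstar_eq th_Y th_Y_Suc algebra_simps)
  next
    case False
    hence "i = d" using assms by simp
    thus ?thesis by (simp add: bstar_d)
  qed
  have C: "(if 0 < i then cs i * poly f (th (i - 1)) else 0) - cs i * poly f (th i)
      = CC (YY i) * (poly f ((YY i + 1) * ((YY i + 1) + 1)) - poly f (YY i * (YY i + 1)))"
  proof (cases "0 < i")
    case True thus ?thesis using assms by (simp add: cstar_eq th_Y th_Y_pred algebra_simps)
  next
    case False
    hence "i = 0" by simp
    thus ?thesis by (simp add: cstar_def CC_def)
  qed
  have "LSv f i = ((if i < d then bs i * poly f (th (i + 1)) else 0) - bs i * poly f (th i))
     + ((if 0 < i then cs i * poly f (th (i - 1)) else 0) - cs i * poly f (th i))"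
    unfolding LSv_def astar_def thetas_def by (simp add: algebra_simps)
  thus ?thesis using A C by simp
qed

definition "beta k = real k * ((real k - 1) * r * (real d + 1) - real k * real d * (r + 1) + (real k - 1) * real k)"

lemma key_identity: assumes "2 * y + 1 \<noteq> 0"
  shows "BB y * ((y - real m) * (- 2 * real m - 2)) + CC y * ((y + real m + 1) * (2 * real m + 2))
       = (real m + 1) * (y - real m) * (y + real m + 1) + beta (Suc m)"
proof -
  have "BB y * ((y - real m) * (- 2 * real m - 2)) + CC y * ((y + real m + 1) * (2 * real m + 2))
     = ((r - y) * (y + real d + 1) * ((y - real m) * (- 2 * real m - 2))
        + (- (real d - y) * (y + r + 1)) * ((y + real m + 1) * (2 * real m + 2))) / (2 * (2 * y + 1))"
    unfolding BB_def CC_def by (simp add: add_divide_distrib)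
  also have "(r - y) * (y + real d + 1) * ((y - real m) * (- 2 * real m - 2))
        + (- (real d - y) * (y + r + 1)) * ((y + real m + 1) * (2 * real m + 2))
     = (2 * (2 * y + 1)) * ((real m + 1) * (y - real m) * (y + real m + 1) + beta (Suc m))"
    unfolding beta_def by (simp add: algebra_simps)
  also have "\<dots> / (2 * (2 * y + 1)) = (real m + 1) * (y - real m) * (y + real m + 1) + beta (Suc m)"
    using assms by simp
  finally show ?thesis .
qed

lemma Lstar_phi0: "Lstar r s d (phi 0) = 0"
proof -
  have "Lstar r s d (phi 0) = interp r s d (LSv 1)" by (simp add: Lstar_alt)
  also have "\<dots> = 0" by (rule interp_eqI) (auto simp: LSv_alt)
  finally show ?thesis .
qed

lemma Lstar_phiSuc: assumes "Suc m \<le> d"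
  shows "Lstar r s d (phi (Suc m)) = smult (real (Suc m)) (phi (Suc m)) + smult (beta (Suc m)) (phi m)"
  unfolding Lstar_alt
proof (rule interp_eqI)
  show "degree (smult (real (Suc m)) (phi (Suc m)) + smult (beta (Suc m)) (phi m)) \<le> d"
    using assms by (intro degree_add_le) (auto intro: order_trans[OF degree_smult_le] simp: degree_phi simp del: phi.simps)
next
  fix i assume i: "i \<le> d"
  define y where "y = YY i"
  have y0: "y \<ge> 0" using i by (simp add: y_def)
  have "LSv (phi (Suc m)) i = BB y * (FF (Suc m) (y - 1) - FF (Suc m) y) + CC y * (FF (Suc m) (y + 1) - FF (Suc m) y)"
    using LSv_alt[OF i] unfolding FF_def y_def .
  also have "\<dots> = FF m y * (BB y * ((y - real m) * (- 2 * real m - 2)) + CC y * ((y + real m + 1) * (2 * real m + 2)))"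
    unfolding FF_Suc_minus FF_Suc_plus FF_Suc[of m y] by (simp add: algebra_simps)
  also have "\<dots> = FF m y * ((real m + 1) * (y - real m) * (y + real m + 1) + beta (Suc m))"
  proof -
    have nz: "2 * y + 1 \<noteq> 0" using y0 by simp
    show ?thesis by (simp only: key_identity[OF nz])
  qed
  also have "\<dots> = real (Suc m) * FF (Suc m) y + beta (Suc m) * FF m y"
    by (simp add: FF_Suc algebra_simps)
  also have "\<dots> = poly (smult (real (Suc m)) (phi (Suc m)) + smult (beta (Suc m)) (phi m)) (th i)"
    by (simp add: FF_def th_Y y_def)
  finally show "LSv (phi (Suc m)) i = poly (smult (real (Suc m)) (phi (Suc m)) + smult (beta (Suc m)) (phi m)) (th i)" .
qed

lemma Lstar_phi: assumes "k \<le> d"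
  shows "Lstar r s d (phi k) = smult (real k) (phi k) + smult (beta k) (phi (k - 1))"
proof (cases k)
  case 0 thus ?thesis using Lstar_phi0 by (simp add: beta_def)
next
  case (Suc m) thus ?thesis using Lstar_phiSuc assms by simp
qed

end



context LP begin

lemma Lstar_zero: "Lstar r s d 0 = 0"
  using Lstar_smult[of 0 0] by simp

lemma Lstar_sum: "Lstar r s d (\<Sum>i\<in>A. f i) = (\<Sum>i\<in>A. Lstar r s d (f i))"
  by (induction A rule: infinite_finite_induct) (auto simp: Lstar_zero Lstar_add)

definition "ee j k = (\<Prod>l\<in>{Suc k..j}. beta l / (real j - real l + 1))"
definition "pp j = (\<Sum>k\<le>j. smult (ee j k) (phi k))"

lemma ee_jj: "ee j j = 1" by (simp add: ee_def)

lemma ee_step: assumes "k < j" shows "ee j k * (real j - real k) = ee j (Suc k) * beta (Suc k)"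
proof -
  have "{Suc k..j} = insert (Suc k) {Suc (Suc k)..j}" using assms by (intro Icc_eq_insert_lb_nat) simp
  hence "ee j k = beta (Suc k) / (real j - real (Suc k) + 1) * ee j (Suc k)"
    unfolding ee_def by simp
  moreover have "real j - real (Suc k) + 1 = real j - real k" by simp
  moreover have "real j - real k \<noteq> 0" using assms by simp
  ultimately show ?thesis by simp
qed

lemma Lstar_pp: assumes "j \<le> d" shows "Lstar r s d (pp j) = smult (real j) (pp j)"
proof -
  have "Lstar r s d (pp j) = (\<Sum>k\<le>j. smult (ee j k) (smult (real k) (phi k) + smult (beta k) (phi (k - 1))))"
    unfolding pp_def Lstar_sum Lstar_smult using assms by (intro sum.cong refl) (simp add: Lstar_phi)
  also have "\<dots> = (\<Sum>k\<le>j. smult (ee j k * real k) (phi k)) + (\<Sum>k\<le>j. smult (ee j k * beta k) (phi (k - 1)))"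
    by (simp add: sum.distrib smult_add_right)
  also have "(\<Sum>k\<le>j. smult (ee j k * beta k) (phi (k - 1))) = (\<Sum>k<j. smult (ee j (Suc k) * beta (Suc k)) (phi k))"
    by (subst sum.atMost_shift) (simp add: beta_def)
  also have "\<dots> = (\<Sum>k<j. smult (ee j k * (real j - real k)) (phi k))"
    by (intro sum.cong refl) (simp add: ee_step)
  also have "(\<Sum>k\<le>j. smult (ee j k * real k) (phi k)) = (\<Sum>k<j. smult (ee j k * real k) (phi k)) + smult (real j) (phi j)"
    by (simp add: lessThan_Suc_atMost[symmetric] ee_jj)
  also have "(\<Sum>k<j. smult (ee j k * real k) (phi k)) + smult (real j) (phi j) + (\<Sum>k<j. smult (ee j k * (real j - real k)) (phi k))
      = (\<Sum>k<j. smult (ee j k * real k) (phi k) + smult (ee j k * (real j - real k)) (phi k)) + smult (real j) (phi j)"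
    by (simp add: sum.distrib)
  also have "\<dots> = (\<Sum>k<j. smult (real j) (smult (ee j k) (phi k))) + smult (real j) (smult (ee j j) (phi j))"
    by (simp add: smult_add_left[symmetric] algebra_simps ee_jj)
  also have "\<dots> = smult (real j) (pp j)"
    by (simp add: pp_def lessThan_Suc_atMost[symmetric] smult_add_right smult_sum2)
  finally show ?thesis .
qed

lemma pp_deg_coeff: "degree (pp j) \<le> j \<and> coeff (pp j) j = 1"
proof
  show "degree (pp j) \<le> j" unfolding pp_def
    by (intro degree_sum_le) (auto intro: order_trans[OF degree_smult_le] simp: degree_phi simp del: phi.simps)
  have "coeff (pp j) j = (\<Sum>k\<le>j. ee j k * coeff (phi k) j)" by (simp add: pp_def coeff_sum del: phi.simps)
  also have "\<dots> = (\<Sum>k\<le>j. if k = j then 1 else 0)"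
  proof (intro sum.cong refl)
    fix k assume "k \<in> {..j}"
    thus "ee j k * coeff (phi k) j = (if k = j then 1 else 0)"
      using coeff_eq_0[of "phi k" j] by (auto simp: degree_phi coeff_phi ee_jj simp del: phi.simps)
  qed
  also have "\<dots> = 1" by simp
  finally show "coeff (pp j) j = 1" .
qed

lemma degree_pp: "degree (pp j) = j"
  using pp_deg_coeff[of j] by (metis le_antisym le_degree zero_neq_one)

lemma coeff_pp: "coeff (pp j) j = 1" using pp_deg_coeff by blast

primrec ww :: "nat \<Rightarrow> real" where
  "ww 0 = 1"
| "ww (Suc i) = ww i * bs i / cs (Suc i)"

declare ww.simps(2)[simp del]

lemma ww_pos: "i \<le> d \<Longrightarrow> ww i > 0"
proof (induction i)
  case 0 thus ?case by simp
next
  case (Suc i)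
  have "bs i / cs (Suc i) > 0" using bstar_neg[of i] cstar_neg[of "Suc i"] Suc.prems by (intro divide_neg_neg) auto
  thus ?case using Suc mult_pos_pos[of "ww i" "bs i / cs (Suc i)"] by (simp add: ww.simps(2))
qed

lemma ww_bal: "i < d \<Longrightarrow> ww i * bs i = ww (Suc i) * cs (Suc i)"
  using cstar_neg[of "Suc i"] by (simp add: ww.simps(2))

definition "ip f g = (\<Sum>i\<le>d. ww i * poly f (th i) * poly g (th i))"

lemma ip_sym: "ip f g = ip g f"
  unfolding ip_def by (simp add: algebra_simps)

lemma ip_add_left: "ip (f + g) h = ip f h + ip g h"
  unfolding ip_def by (simp add: algebra_simps sum.distrib)

lemma ip_diff_left: "ip (f - g) h = ip f h - ip g h"
  unfolding ip_def by (simp add: algebra_simps sum_subtractf)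

lemma ip_smult_left: "ip (smult c f) h = c * ip f h"
  unfolding ip_def by (simp add: algebra_simps sum_distrib_left)

lemma ip_sum_left: "ip (\<Sum>i\<in>A. f i) h = (\<Sum>i\<in>A. ip (f i) h)"
  unfolding ip_def by (simp add: poly_sum sum_distrib_left sum_distrib_right sum.swap[of _ A] algebra_simps)

definition "XX f g = (\<Sum>i<d. ww i * bs i * (poly f (th (i+1)) * poly g (th i) + poly f (th i) * poly g (th (i+1))))
   + (\<Sum>i\<le>d. ww i * astar r s d i * poly f (th i) * poly g (th i))"

lemma XX_sym: "XX f g = XX g f"
  unfolding XX_def by (simp add: algebra_simps)

lemma ip_Lstar: "ip (Lstar r s d f) g = XX f g"
proof -
  let ?f = "\<lambda>i. poly f (th i)" and ?g = "\<lambda>i. poly g (th i)"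
  have "ip (Lstar r s d f) g = (\<Sum>i\<le>d. ww i * LSv f i * ?g i)"
    unfolding ip_def by (intro sum.cong refl) (simp add: poly_Lstar)
  also have "\<dots> = (\<Sum>i\<le>d. (if i < d then ww i * bs i * ?f (i+1) * ?g i else 0))
      + (\<Sum>i\<le>d. ww i * astar r s d i * ?f i * ?g i)
      + (\<Sum>i\<le>d. (if 0 < i then ww i * cs i * ?f (i - 1) * ?g i else 0))"
  proof -
    have "(\<Sum>i\<le>d. ww i * LSv f i * ?g i) = (\<Sum>i\<le>d. (if i < d then ww i * bs i * ?f (i+1) * ?g i else 0)
      + ww i * astar r s d i * ?f i * ?g i + (if 0 < i then ww i * cs i * ?f (i - 1) * ?g i else 0))"
      by (intro sum.cong refl) (auto simp: LSv_def algebra_simps)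
    thus ?thesis by (simp only: sum.distrib)
  qed
  also have "(\<Sum>i\<le>d. (if i < d then ww i * bs i * ?f (i+1) * ?g i else 0)) = (\<Sum>i<d. ww i * bs i * ?f (i+1) * ?g i)"
    by (simp add: lessThan_Suc_atMost[symmetric])
  also have "(\<Sum>i\<le>d. (if 0 < i then ww i * cs i * ?f (i - 1) * ?g i else 0)) = (\<Sum>i<d. ww (Suc i) * cs (Suc i) * ?f i * ?g (Suc i))"
    by (subst sum.atMost_shift) simp
  also have "\<dots> = (\<Sum>i<d. ww i * bs i * ?f i * ?g (i + 1))"
    by (intro sum.cong refl) (simp add: ww_bal)
  finally show ?thesis unfolding XX_def by (simp add: sum.distrib algebra_simps)
qed

lemma Lstar_selfadj: "ip (Lstar r s d f) g = ip f (Lstar r s d g)"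
  using ip_Lstar[of f g] ip_Lstar[of g f] XX_sym ip_sym by metis

lemma pp_orth: assumes "i \<le> d" "j \<le> d" "i \<noteq> j" shows "ip (pp i) (pp j) = 0"
proof -
  have "real i * ip (pp i) (pp j) = ip (Lstar r s d (pp i)) (pp j)"
    using assms by (simp add: Lstar_pp ip_smult_left)
  also have "\<dots> = ip (pp i) (Lstar r s d (pp j))" by (rule Lstar_selfadj)
  also have "\<dots> = real j * ip (pp i) (pp j)"
    using assms by (simp add: Lstar_pp ip_smult_left ip_sym[of "pp i"])
  finally have "(real i - real j) * ip (pp i) (pp j) = 0" by (simp add: algebra_simps)
  thus ?thesis using assms by simp
qed

lemma ip_pos: assumes "degree f \<le> d" "f \<noteq> 0" shows "ip f f > 0"
proof -
  obtain k where k: "k \<le> d" "poly f (th k) \<noteq> 0"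
    using poly_eq_th[of f 0] assms by auto
  show ?thesis unfolding ip_def
  proof (rule sum_pos2[of _ k])
    have "poly f (th k) * poly f (th k) > 0" using k(2) not_real_square_gt_zero by blast
    thus "0 < ww k * poly f (th k) * poly f (th k)" using k ww_pos[of k] by (simp add: mult.assoc)
    show "\<And>i. i \<in> {..d} \<Longrightarrow> 0 \<le> ww i * poly f (th i) * poly f (th i)"
      using ww_pos by (simp add: mult.assoc less_imp_le)
  qed (use k in auto)
qed

lemma pp_nz: "pp j \<noteq> 0" using coeff_pp[of j] by auto

lemma ip_pp_pos: "j \<le> d \<Longrightarrow> ip (pp j) (pp j) > 0"
  using ip_pos[of "pp j"] degree_pp pp_nz by simp

lemma deg_drop: assumes "degree q \<le> Suc n" "coeff q (Suc n) = 0" shows "degree q \<le> n"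
proof (rule ccontr)
  assume "\<not> degree q \<le> n"
  hence "degree q = Suc n" using assms by simp
  hence "coeff q (degree q) = 0" using assms by simp
  hence "q = 0" by simp
  thus False using \<open>degree q = Suc n\<close> by simp
qed

lemma expand_pp: "k \<le> d \<Longrightarrow> degree f \<le> k \<Longrightarrow> \<exists>c. f = (\<Sum>j\<le>k. smult (c j) (pp j))"
proof (induction k arbitrary: f)
  case 0
  define g where "g = f - smult (coeff f 0) (pp 0)"
  have "degree g \<le> 0" unfolding g_def using 0 degree_pp[of 0]
    by (intro degree_diff_le) (auto intro: order_trans[OF degree_smult_le])
  moreover have "coeff g 0 = 0" unfolding g_def using coeff_pp[of 0] by simp
  ultimately have "g = 0" by (metis leading_coeff_0_iff le_zero_eq)
  hence "f = (\<Sum>j\<le>0. smult ((\<lambda>_. coeff f 0) j) (pp j))" unfolding g_def by simp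
  thus ?case by (rule exI[where x="\<lambda>_. coeff f 0"])
next
  case (Suc k)
  define g where "g = f - smult (coeff f (Suc k)) (pp (Suc k))"
  have "degree g \<le> Suc k" unfolding g_def using Suc.prems degree_pp[of "Suc k"]
    by (intro degree_diff_le) (auto intro: order_trans[OF degree_smult_le])
  moreover have "coeff g (Suc k) = 0" unfolding g_def using coeff_pp[of "Suc k"] by simp
  ultimately have "degree g \<le> k" by (rule deg_drop)
  then obtain c where c: "g = (\<Sum>j\<le>k. smult (c j) (pp j))" using Suc by auto
  define c' where "c' = c(Suc k := coeff f (Suc k))"
  have "f = g + smult (coeff f (Suc k)) (pp (Suc k))" unfolding g_def by simp
  also have "\<dots> = (\<Sum>j\<le>k. smult (c' j) (pp j)) + smult (c' (Suc k)) (pp (Suc k))"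
  proof -
    have "(\<Sum>j\<le>k. smult (c j) (pp j)) = (\<Sum>j\<le>k. smult (c' j) (pp j))"
      by (intro sum.cong refl) (simp add: c'_def)
    thus ?thesis unfolding c by (simp add: c'_def)
  qed
  also have "\<dots> = (\<Sum>j\<le>Suc k. smult (c' j) (pp j))" by simp
  finally show ?case by (rule exI[where x=c'])
qed

lemma ip_sum_pp: "ip (\<Sum>i\<in>A. smult (c i) (pp i)) g = (\<Sum>i\<in>A. c i * ip (pp i) g)"
  by (simp add: ip_sum_left ip_smult_left)

lemma orth_low: assumes "j \<le> d" "degree f < j" shows "ip f (pp j) = 0"
proof -
  obtain i where j: "j = Suc i" using assms by (cases j) auto
  obtain c where c: "f = (\<Sum>l\<le>i. smult (c l) (pp l))" using expand_pp[of i f] assms j by auto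
  have "ip f (pp j) = (\<Sum>l\<le>i. c l * ip (pp l) (pp j))" unfolding c by (rule ip_sum_pp)
  also have "\<dots> = 0" using assms j by (intro sum.neutral) (auto simp: pp_orth)
  finally show ?thesis .
qed

lemma coord2: assumes "m \<le> d" shows "ip (\<Sum>i<Suc d. smult (c i) (pp i)) (pp m) = c m * ip (pp m) (pp m)"
proof -
  have "ip (\<Sum>i<Suc d. smult (c i) (pp i)) (pp m) = (\<Sum>i<Suc d. c i * ip (pp i) (pp m))" by (rule ip_sum_pp)
  also have "\<dots> = (\<Sum>i<Suc d. if i = m then c m * ip (pp m) (pp m) else 0)"
    using assms by (intro sum.cong refl) (auto simp: pp_orth)
  also have "\<dots> = c m * ip (pp m) (pp m)" using assms by simp
  finally show ?thesis .
qed

lemma expand2: assumes "degree v \<le> d" shows "v = (\<Sum>i<Suc d. smult (ip v (pp i) / ip (pp i) (pp i)) (pp i))"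
proof -
  obtain c where c: "v = (\<Sum>j\<le>d. smult (c j) (pp j))" using expand_pp[of d v] assms by auto
  hence c': "v = (\<Sum>j<Suc d. smult (c j) (pp j))" by (simp add: lessThan_Suc_atMost)
  have "(\<Sum>j<Suc d. smult (c j) (pp j)) = (\<Sum>i<Suc d. smult (ip v (pp i) / ip (pp i) (pp i)) (pp i))"
  proof (intro sum.cong refl)
    fix i assume "i \<in> {..<Suc d}"
    hence i: "i \<le> d" by simp
    have "ip v (pp i) = c i * ip (pp i) (pp i)" using coord2[OF i, of c] c' by simp
    thus "smult (c i) (pp i) = smult (ip v (pp i) / ip (pp i) (pp i)) (pp i)" using ip_pp_pos[OF i] by simp
  qed
  thus ?thesis using c' by simp
qed

lemma ob2: "ordered_basis (Pd d) (Suc d) pp"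
  unfolding ordered_basis_def
proof (intro conjI ballI allI impI)
  fix i assume "i < Suc d" thus "pp i \<in> Pd d" using degree_pp by (simp add: Pd_def)
next
  fix v assume v: "v \<in> Pd d"
  let ?c = "\<lambda>i. if i < Suc d then ip v (pp i) / ip (pp i) (pp i) else 0"
  show "\<exists>!c. (\<forall>i\<ge>Suc d. c i = 0) \<and> v = (\<Sum>i<Suc d. smult (c i) (pp i))"
  proof (rule ex1I[of _ ?c])
    have "v = (\<Sum>i<Suc d. smult (ip v (pp i) / ip (pp i) (pp i)) (pp i))" using v expand2 by (simp add: Pd_def)
    also have "\<dots> = (\<Sum>i<Suc d. smult (?c i) (pp i))" by (intro sum.cong) auto
    finally show "(\<forall>i\<ge>Suc d. ?c i = 0) \<and> v = (\<Sum>i<Suc d. smult (?c i) (pp i))" by auto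
  next
    fix c assume c: "(\<forall>i\<ge>Suc d. c i = 0) \<and> v = (\<Sum>i<Suc d. smult (c i) (pp i))"
    show "c = ?c"
    proof
      fix i show "c i = ?c i"
      proof (cases "i < Suc d")
        case True
        hence i: "i \<le> d" by simp
        have "ip v (pp i) = c i * ip (pp i) (pp i)" using coord2[OF i, of c] c by simp
        thus ?thesis using True ip_pp_pos[OF i] by simp
      next
        case False thus ?thesis using c by simp
      qed
    qed
  qed
qed

lemma matrix2: assumes "\<And>f. degree f \<le> d \<Longrightarrow> degree (X f) \<le> d"
  shows "matrix_of (Suc d) pp X (\<lambda>i j. ip (X (pp j)) (pp i) / ip (pp i) (pp i))"
  unfolding matrix_of_def using expand2 assms degree_pp by simp

lemma AS_pp: assumes "j \<le> d" shows "AS (pp j) = smult ((real j + kap) * (real j + kap)) (pp j)"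
  unfolding AS_def Let_def using assms
  by (simp add: Lstar_pp Lstar_add Lstar_smult smult_add_left[symmetric] algebra_simps)

lemma diag2: "diagonal_mat (Suc d) (\<lambda>i j. ip (AS (pp j)) (pp i) / ip (pp i) (pp i))"
  unfolding diagonal_mat_def
proof (intro allI impI)
  fix i j assume "i < Suc d" "j < Suc d" "i \<noteq> j"
  thus "ip (AS (pp j)) (pp i) / ip (pp i) (pp i) = 0"
    by (simp add: AS_pp ip_smult_left pp_orth)
qed

lemma ip_Lmap: "ip (Lmap r s d f) g = ip (pCons 0 f) g"
  unfolding ip_def by (intro sum.cong refl) (simp add: poly_Lmap)

lemma ip_pCons_swap: "ip (pCons 0 f) g = ip f (pCons 0 g)"
  unfolding ip_def by (simp add: algebra_simps)

lemma degree_xpp: "degree (pCons 0 (pp j)) \<le> Suc j"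
  using degree_pCons_le[of 0 "pp j"] degree_pp[of j] by simp

lemma npos: assumes "i + 1 \<le> d" shows "ip (pCons 0 (pp i)) (pp (i + 1)) > 0"
proof -
  let ?q = "pCons 0 (pp i) - pp (Suc i)"
  have "degree ?q \<le> Suc i" using degree_xpp[of i] degree_pp[of "Suc i"] by (intro degree_diff_le) auto
  moreover have "coeff ?q (Suc i) = 0" using coeff_pp[of i] coeff_pp[of "Suc i"] by simp
  ultimately have "degree ?q \<le> i" by (rule deg_drop)
  hence "ip ?q (pp (Suc i)) = 0" using assms by (intro orth_low) auto
  hence "ip (pCons 0 (pp i)) (pp (Suc i)) = ip (pp (Suc i)) (pp (Suc i))" by (simp add: ip_diff_left)
  thus ?thesis using ip_pp_pos[of "Suc i"] assms by simp
qed

lemma tri2: "irred_tridiagonal_mat (Suc d) (\<lambda>i j. ip (Lmap r s d (pp j)) (pp i) / ip (pp i) (pp i))"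
  unfolding irred_tridiagonal_mat_def ip_Lmap
proof (intro conjI allI impI)
  fix i j assume ij: "i < Suc d" "j < Suc d" "j + 1 < i \<or> i + 1 < j"
  from ij(3) have "ip (pCons 0 (pp j)) (pp i) = 0"
  proof
    assume "j + 1 < i"
    thus ?thesis using ij degree_xpp[of j] by (intro orth_low) auto
  next
    assume "i + 1 < j"
    hence "ip (pCons 0 (pp i)) (pp j) = 0" using ij degree_xpp[of i] by (intro orth_low) auto
    thus ?thesis using ip_pCons_swap[of "pp j" "pp i"] ip_sym[of "pp j" "pCons 0 (pp i)"] by simp
  qed
  thus "ip (pCons 0 (pp j)) (pp i) / ip (pp i) (pp i) = 0" by simp
next
  fix i assume i: "i + 1 < Suc d"
  have p1: "ip (pCons 0 (pp i)) (pp (i + 1)) > 0" using i by (intro npos) auto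
  have p2: "ip (pp (i+1)) (pp (i+1)) > 0" "ip (pp i) (pp i) > 0" using i by (auto intro: ip_pp_pos)
  show "ip (pCons 0 (pp i)) (pp (i + 1)) / ip (pp (i + 1)) (pp (i + 1)) \<noteq> 0" using p1 p2 by simp
  have "ip (pCons 0 (pp (i + 1))) (pp i) = ip (pCons 0 (pp i)) (pp (i + 1))"
    using ip_pCons_swap[of "pp (i+1)" "pp i"] ip_sym[of "pp (i+1)" "pCons 0 (pp i)"] by simp
  thus "ip (pCons 0 (pp (i + 1))) (pp i) / ip (pp i) (pp i) \<noteq> 0" using p1 p2 by simp
qed

lemma main: "leonard_pair (Pd d) (Lmap r s d) AS"
  unfolding leonard_pair_def
proof (intro conjI)
  show "linear_on (Pd d) (Lmap r s d)" by (rule linear_on_Lmap)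
  show "linear_on (Pd d) AS" by (rule linear_on_AS)
  show "\<exists>n B M Ms. ordered_basis (Pd d) n B \<and> matrix_of n B (Lmap r s d) M \<and> matrix_of n B AS Ms \<and>
        diagonal_mat n M \<and> irred_tridiagonal_mat n Ms"
    using ob1 matrix1[of "Lmap r s d"] matrix1[of AS] diag1 tri1 degree_Lmap degree_AS by blast
  show "\<exists>n B M Ms. ordered_basis (Pd d) n B \<and> matrix_of n B (Lmap r s d) M \<and> matrix_of n B AS Ms \<and>
        diagonal_mat n Ms \<and> irred_tridiagonal_mat n M"
    using ob2 matrix2[of "Lmap r s d"] matrix2[of AS] diag2 tri2 degree_Lmap degree_AS by blast
qed

end

theorem theorem1p3:
  fixes d :: nat and r s :: real
  assumes "r > -1" and "s > -1" and "r \<noteq> 0" and "r + s = 0"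
  shows "leonard_pair (Pd d) (Lmap r s d)
           (\<lambda>f. let g = Lstar r s d f + smult ((r - real d) / 2) f
                in Lstar r s d g + smult ((r - real d) / 2) g)"
proof -
  interpret LP r s d using assms by unfold_locales
  have "(\<lambda>f. let g = Lstar r s d f + smult ((r - real d) / 2) f
                in Lstar r s d g + smult ((r - real d) / 2) g) = AS"
    by (rule ext) (simp add: AS_def kap_def)
  thus ?thesis using main by simp
qed


end
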